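(* Let $C_k$ be the last (rightmost) column of the diagram of a composition $(c_1,\dots,c_k)$ of $n$, and let $\mathcal B_k$ be the set of root vectors $x_{i,j}$ with $j$ an entry of $C_k$ and $i$ not an entry of $C_k$ (the last column block of $\mathfrak m$). (i) For every pair $(C,C')$ of neighbouring columns with $C'\neq C_k$, one has $\mathcal B_k\subseteq\mathfrak u_{C,C'}$; hence $\mathcal B_k\subseteq\mathfrak u'$, where $\mathfrak u'$ is the intersection of the $\mathfrak u_{C,C'}$ over all neighbouring pairs $(C,C')$ with $C'\ne C_k$. (ii) If no other column of the diagram has height $c_k$, then $\mathcal B_k\subseteq\mathfrak u_{\pi'}$.
   Context: Let $n\ge 2$, $x_{i,j}$ the $n\times n$ matrix unit with $1$ in position $(i,j)$. A composition $(c_1,\dots,c_k)$ of $n$ determines the standard parabolic subalgebra of block upper triangular matrices with diagonal blocks of sizes $c_1,\dots,c_k$, whose nilradical $\mathfrak m$ is spanned by the $x_{i,j}$, $i<j$ in different blocks. Diagram and tableau: columns $C_1,\dots,C_k$ from left to right, $C_i$ having $c_i$ boxes in rows $R_1,\dots,R_{c_i}$ (rows numbered top to bottom), filled with $1,\dots,n$ so that $C_i$ contains $c_1+\dots+c_{i-1}+1,\dots,c_1+\dots+c_i$, increasing downwards. Two columns of the same height $s$ are neighbouring if no column of height $s$ lies strictly between them. Shifted tableau and $\mathfrak u_{C,C'}$: let $C$ (left) and $C'$ (right) be neighbouring columns of height $s$, and let $N$ be the largest entry of $C'$. Let $D_1,\dots,D_u$ ($u\ge 0$) be the columns of height $>s$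 strictly between $C$ and $C'$, left to right, and $D_0=C$. For a column $D$, let $D^{\le s}$ be the set of entries in its top $s$ boxes and $D^{>s}$ the remaining entries; put $D_{u+1}^{>s}:=\{N\}$. Replace, for $0\le i\le u$, the column $D_i$ by the column with entries $D_i^{\le s}\cup D_{i+1}^{>s}$; replace $C'$ by $C'$ with $N$ removed; leave other columns unchanged. Reading the new columns left to right, each from bottom to top, gives a word $w_{C,C'}$ (a permutation of $1,\dots,n$). $\mathfrak u_{C,C'}$ is the span of the $x_{i,j}$, $i<j$, such that $i$ occurs before $j$ in $w_{C,C'}$. Finally $\mathfrak u_{\pi'}$ is the intersection of the $\mathfrak u_{C,C'}$ over all pairs $(C,C')$ of neighbouring columns. *)

theory Defs
  imports Main
begin

text \<open>A composition is a list c of positive naturals; n = sum_list c.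
  Columns are indexed 0 .. length c - 1 (left to right); column j contains the
  entries c_1+...+c_j+1, ..., c_1+...+c_{j+1}, listed top to bottom (increasing).
  Root vectors x_{i,j} are represented by the index pairs (i,j) with 1 <= i, j <= n.\<close>

definition col :: "nat list \<Rightarrow> nat \<Rightarrow> nat list" where
  "col c j = [sum_list (take j c) + 1 ..< sum_list (take j c) + c ! j + 1]"

definition neighbouring :: "nat list \<Rightarrow> nat \<Rightarrow> nat \<Rightarrow> bool" where
  "neighbouring c a b \<longleftrightarrow> a < b \<and> b < length c \<and> c ! a = c ! b \<and>
     (\<forall>m. a < m \<and> m < b \<longrightarrow> c ! m \<noteq> c ! a)"

text \<open>New column at position j in the shifted tableau for the pair (a,b).
  The columns D_1,...,D_u are the m with a < m < b and height > s; D_0 = a.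
  For D_i, the successor D_{i+1} is the first such m beyond it (or the
  marker {N} if none).\<close>
definition newcol :: "nat list \<Rightarrow> nat \<Rightarrow> nat \<Rightarrow> nat \<Rightarrow> nat list" where
  "newcol c a b j =
    (let s = c ! a; N = last (col c b);
         nxt = filter (\<lambda>m. s < c ! m) [Suc j ..< b] in
     if j = b then butlast (col c b)
     else if j = a \<or> (a < j \<and> j < b \<and> s < c ! j) then
       (if nxt = [] then take s (col c j) @ [N]
        else take s (col c j) @ drop s (col c (hd nxt)))
     else col c j)"

text \<open>The word w_{C,C'}: new columns left to right, each read bottom to top.\<close>
definition word :: "nat list \<Rightarrow> nat \<Rightarrow> nat \<Rightarrow> nat list" where
  "word c a b = concat (map (\<lambda>j. rev (newcol c a b j)) [0 ..< length c])"

definition occurs_before :: "nat list \<Rightarrow> nat \<Rightarrow> nat \<Rightarrow> bool" where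
  "occurs_before w i j \<longleftrightarrow> (\<exists>p q. p < q \<and> q < length w \<and> w ! p = i \<and> w ! q = j)"

definition uCC :: "nat list \<Rightarrow> nat \<Rightarrow> nat \<Rightarrow> (nat \<times> nat) set" where
  "uCC c a b = {(i, j). 1 \<le> i \<and> i < j \<and> j \<le> sum_list c \<and> occurs_before (word c a b) i j}"

definition mroots :: "nat list \<Rightarrow> (nat \<times> nat) set" where
  "mroots c = {(i, j). 1 \<le> i \<and> i < j \<and> j \<le> sum_list c \<and>
                       (\<forall>t < length c. \<not> (i \<in> set (col c t) \<and> j \<in> set (col c t)))}"

definition uprime :: "nat list \<Rightarrow> (nat \<times> nat) set" where
  "uprime c = {(i, j) \<in> mroots c. \<forall>a b. neighbouring c a b \<and> b \<noteq> length c - 1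
                                         \<longrightarrow> (i, j) \<in> uCC c a b}"

definition upi :: "nat list \<Rightarrow> (nat \<times> nat) set" where
  "upi c = {(i, j) \<in> mroots c. \<forall>a b. neighbouring c a b \<longrightarrow> (i, j) \<in> uCC c a b}"

definition Bk :: "nat list \<Rightarrow> (nat \<times> nat) set" where
  "Bk c = {(i, j). j \<in> set (col c (length c - 1)) \<and> i \<in> {1 .. sum_list c}
                   \<and> i \<notin> set (col c (length c - 1))}"

end

theory Submission
  imports Defs
begin

lemma col_set: "x \<in> set (col c t) \<longleftrightarrow> sum_list (take t c) < x \<and> x \<le> sum_list (take t c) + c!t"
  by (auto simp: col_def)

lemma S_mono: "t \<le> t' \<Longrightarrow> sum_list (take t (c::nat list)) \<le> sum_list (take t' c)"
proof -
  assume "t \<le> t'"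
  then have "take t c = take t (take t' c)" by (simp add: min_absorb1)
  moreover have "sum_list (take t' c) = sum_list (take t (take t' c)) + sum_list (drop t (take t' c))"
    by (metis append_take_drop_id sum_list_append)
  ultimately have "sum_list (take t' c) = sum_list (take t c) + sum_list (drop t (take t' c))" by simp
  then show ?thesis by linarith
qed

lemma S_Suc: "t < length c \<Longrightarrow> sum_list (take (Suc t) c) = sum_list (take t c) + c!t"
  by (simp add: take_Suc_conv_app_nth)

lemma cover: "1 \<le> i \<Longrightarrow> i \<le> sum_list c \<Longrightarrow> \<exists>t<length c. i \<in> set (col c t)"
proof (induction c rule: rev_induct)
  case Nil then show ?case by simp
next
  case (snoc x c)
  show ?case
  proof (cases "i \<le> sum_list c")
    case True
    then obtain t where t: "t < length c" "i \<in> set (col c t)" using snoc by auto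
    have "take t (c @ [x]) = take t c" "(c @ [x]) ! t = c ! t" using t by (auto simp: nth_append)
    then show ?thesis using t by (intro exI[of _ t]) (auto simp: col_set)
  next
    case False
    then show ?thesis using snoc.prems
      by (intro exI[of _ "length c"]) (auto simp: col_set)
  qed
qed

lemma order: "t < t' \<Longrightarrow> t' < length c \<Longrightarrow> x \<in> set (col c t) \<Longrightarrow> y \<in> set (col c t') \<Longrightarrow> x < y"
proof -
  assume a: "t < t'" "t' < length c" "x \<in> set (col c t)" "y \<in> set (col c t')"
  have "x \<le> sum_list (take (Suc t) c)" using a by (simp add: col_set S_Suc)
  also have "\<dots> \<le> sum_list (take t' c)" using a S_mono[of "Suc t" t' c] by simp
  also have "\<dots> < y" using a by (simp add: col_set)
  finally show ?thesis .
qed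

lemma ob_app: "x \<in> set xs \<Longrightarrow> y \<in> set ys \<Longrightarrow> occurs_before (xs @ ys) x y"
proof -
  assume "x \<in> set xs" "y \<in> set ys"
  then obtain p q where "p < length xs" "xs ! p = x" "q < length ys" "ys ! q = y"
    by (metis in_set_conv_nth)
  then show ?thesis unfolding occurs_before_def
    by (intro exI[of _ p] exI[of _ "length xs + q"]) (auto simp: nth_append)
qed

lemma upt_split3: "l \<le> t \<Longrightarrow> t < b \<Longrightarrow> [l..<b] = [l..<t] @ t # [Suc t..<b]"
  by (metis le_add_diff_inverse less_imp_le upt_add_eq_append upt_conv_Cons)

lemma in_earlier:
  assumes nb: "neighbouring c a b" and t: "t < length c" and i: "i \<in> set (col c t)"
  shows "\<exists>j. j \<le> max t b \<and> i \<in> set (newcol c a b j)"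
proof -
  define s where "s = c!a"
  define p where "p = (\<lambda>m. s < c!m)"
  from nb have ab: "a<b" "b<length c" "c!b = s" unfolding neighbouring_def s_def by auto
  have lenC: "length (col c m) = c!m" for m by (simp add: col_def)
  have nc: "newcol c a b D = (let nxt = filter p [Suc D..<b] in if nxt = [] then take s (col c D) @ [last (col c b)] else take s (col c D) @ drop s (col c (hd nxt)))"
    if "D = a \<or> (a<D \<and> D<b \<and> p D)" for D
    using that ab unfolding newcol_def s_def p_def Let_def by auto
  consider "t = b" | "t = a \<or> (a<t \<and> t<b \<and> p t)" | "t \<noteq> b \<and> \<not>(t = a \<or> (a<t \<and> t<b \<and> p t))" by blast
  then show ?thesis
  proof cases
    case 1
    have ne: "col c b \<noteq> []" using i 1 by auto
    show ?thesis
    proof (cases "i = last (col c b)")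
      case False
      then have "i \<in> set (butlast (col c b))" using i 1 ne
        by (metis append_butlast_last_id butlast_snoc in_set_butlast_appendI rotate1.simps(2) set_ConsD set_rotate1)
      moreover have "newcol c a b b = butlast (col c b)" by (simp add: newcol_def)
      ultimately show ?thesis using 1 by auto
    next
      case True
      define A where "A = {a} \<union> {m. a<m \<and> m<b \<and> p m}"
      have fin: "finite A" "A \<noteq> {}" unfolding A_def by (auto intro: finite_subset[of _ "{..b}"])
      define M where "M = Max A"
      have MA: "M \<in> A" and Mmax: "\<forall>m\<in>A. m \<le> M" using fin by (auto simp: M_def)
      have Mb: "M < b" "M = a \<or> (a<M \<and> M<b \<and> p M)" using MA ab by (auto simp: A_def)
      have "filter p [Suc M..<b] = []"
      proof (rule filter_False, rule ballI)
        fix x assume "x \<in> set [Suc M..<b]"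
        then have "M < x" "x < b" by auto
        then have "a < x" using Mb by auto
        show "\<not> p x"
        proof
          assume "p x"
          then have "x \<in> A" using \<open>a < x\<close> \<open>x < b\<close> by (simp add: A_def)
          then show False using Mmax \<open>M < x\<close> by auto
        qed
      qed
      then have "newcol c a b M = take s (col c M) @ [last (col c b)]" using nc[OF Mb(2)] by simp
      then show ?thesis using True Mb 1 by (intro exI[of _ M]) auto
    qed
  next
    case 2
    have "i \<in> set (take s (col c t)) \<or> i \<in> set (drop s (col c t))" using i
      by (metis append_take_drop_id Un_iff set_append)
    then show ?thesis
    proof
      assume "i \<in> set (take s (col c t))"
      then have "i \<in> set (newcol c a b t)" using nc[OF 2] by (simp add: Let_def)
      then show ?thesis by (intro exI[of _ t]) auto
    next
      assume id: "i \<in> set (drop s (col c t))"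
      then have "t \<noteq> a" using lenC s_def by auto
      then have tD: "a<t" "t<b" "p t" using 2 by auto
      define A where "A = {a} \<union> {m. a<m \<and> m<t \<and> p m}"
      have fin: "finite A" "A \<noteq> {}" unfolding A_def by (auto intro: finite_subset[of _ "{..t}"])
      define P where "P = Max A"
      have PA: "P \<in> A" and Pmax: "\<forall>m\<in>A. m \<le> P" using fin by (auto simp: P_def)
      have Pt: "P < t" "P = a \<or> (a<P \<and> P<b \<and> p P)" using PA tD by (auto simp: A_def)
      have f0: "filter p [Suc P..<t] = []"
      proof (rule filter_False, rule ballI)
        fix x assume "x \<in> set [Suc P..<t]"
        then have "P < x" "x < t" by auto
        then have "a < x" using Pt by auto
        show "\<not> p x"
        proof
          assume "p x"
          then have "x \<in> A" using \<open>a < x\<close> \<open>x < t\<close> by (simp add: A_def)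
          then show False using Pmax \<open>P < x\<close> by auto
        qed
      qed
      have "filter p [Suc P..<b] = t # filter p [Suc t..<b]"
        using upt_split3[of "Suc P" t b] Pt tD f0 by simp
      then have "newcol c a b P = take s (col c P) @ drop s (col c t)" using nc[OF Pt(2)] by simp
      then show ?thesis using id Pt by (intro exI[of _ P]) auto
    qed
  next
    case 3
    then have "newcol c a b t = col c t" by (auto simp: newcol_def Let_def s_def p_def)
    then show ?thesis using i by (intro exI[of _ t]) auto
  qed
qed

theorem lemma2p9:
  fixes c :: "nat list" and n :: nat
  assumes comp: "\<forall>x \<in> set c. 0 < x"
    and n_def: "n = sum_list c"
    and n2: "2 \<le> n"
  shows "(\<forall>a b. neighbouring c a b \<and> b \<noteq> length c - 1 \<longrightarrow> Bk c \<subseteq> uCC c a b)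
         \<and> Bk c \<subseteq> uprime c
         \<and> ((\<forall>j < length c - 1. c ! j \<noteq> c ! (length c - 1)) \<longrightarrow> Bk c \<subseteq> upi c)"
proof -
  define k where "k = length c"
  have k0: "0 < k" using n2 n_def k_def by (cases c) auto
  have basic: "\<exists>t. t < k - 1 \<and> i \<in> set (col c t) \<and> 1 \<le> i \<and> i < j \<and> j \<le> sum_list c"
    if "(i,j) \<in> Bk c" for i j
  proof -
    have ij: "j \<in> set (col c (k-1))" "1 \<le> i" "i \<le> sum_list c" "i \<notin> set (col c (k-1))"
      using that by (auto simp: Bk_def k_def)
    obtain t where t: "t < k" "i \<in> set (col c t)" using cover[OF ij(2,3)] k_def by auto
    have tk: "t < k - 1" using t ij(4) by (cases "t = k - 1") auto
    have "i < j" using order[OF tk _ t(2) ij(1)] k0 k_def by simp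
    moreover have "j \<le> sum_list c"
    proof -
      have "j \<le> sum_list (take (Suc (k-1)) c)" using ij(1) S_Suc[of "k-1" c] k0 k_def by (simp add: col_set)
      then show ?thesis using k0 k_def by simp
    qed
    ultimately show ?thesis using tk t ij by auto
  qed
  have mr: "Bk c \<subseteq> mroots c"
  proof
    fix x assume x: "x \<in> Bk c"
    obtain i j where xe: "x = (i,j)" by (cases x)
    obtain t where t: "t < k - 1" "i \<in> set (col c t)" "1 \<le> i" "i < j" "j \<le> sum_list c"
      using basic x xe by blast
    have jc: "j \<in> set (col c (k-1))" "i \<notin> set (col c (k-1))" using x xe by (auto simp: Bk_def k_def)
    have "\<not> (i \<in> set (col c t') \<and> j \<in> set (col c t'))" if "t' < length c" for t'
    proof (cases "t' = k - 1")
      case True then show ?thesis using jc by auto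
    next
      case False
      then have "t' < k - 1" using that k_def by auto
      then show ?thesis using order[of t' "k-1" c j j] jc k0 k_def by auto
    qed
    then show "x \<in> mroots c" using t xe by (auto simp: mroots_def)
  qed
  have p1: "\<forall>a b. neighbouring c a b \<and> b \<noteq> length c - 1 \<longrightarrow> Bk c \<subseteq> uCC c a b"
  proof (intro allI impI subsetI)
    fix a b x assume nb: "neighbouring c a b \<and> b \<noteq> length c - 1" and x: "x \<in> Bk c"
    obtain i j where xe: "x = (i,j)" by (cases x)
    obtain t where t: "t < k - 1" "i \<in> set (col c t)" "1 \<le> i" "i < j" "j \<le> sum_list c"
      using basic x xe by blast
    have jc: "j \<in> set (col c (k-1))" using x xe by (auto simp: Bk_def k_def)
    have ab: "a < b" "b < k - 1" using nb by (auto simp: neighbouring_def k_def)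
    obtain j0 where j0: "j0 \<le> max t b" "i \<in> set (newcol c a b j0)"
    proof -
      have "t < length c" using t(1) k_def by linarith
      then show ?thesis using in_earlier[of c a b t i] nb t that by blast
    qed
    have nk: "newcol c a b (k-1) = col c (k-1)" using ab by (auto simp: newcol_def Let_def)
    have upt: "[0..<k] = [0..<k-1] @ [k-1]" using k0 by (metis Suc_diff_1 upt_Suc zero_le)
    have w: "word c a b = concat (map (\<lambda>j. rev (newcol c a b j)) [0..<k-1]) @ rev (col c (k-1))"
      unfolding word_def k_def[symmetric] upt using nk by simp
    have "i \<in> set (concat (map (\<lambda>j. rev (newcol c a b j)) [0..<k-1]))"
      using j0 t ab by auto
    then have "occurs_before (word c a b) i j" unfolding w using jc by (intro ob_app) auto
    then show "x \<in> uCC c a b" using t xe by (auto simp: uCC_def)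
  qed
  have p2: "Bk c \<subseteq> uprime c" using p1 mr by (auto simp: uprime_def)
  have p3: "Bk c \<subseteq> upi c" if h: "\<forall>j < length c - 1. c ! j \<noteq> c ! (length c - 1)"
  proof -
    have "neighbouring c a b \<Longrightarrow> b \<noteq> length c - 1" for a b
      using h by (auto simp: neighbouring_def)
    then show ?thesis using p1 mr unfolding upi_def by blast
  qed
  show ?thesis using p1 p2 p3 by blast
qed

end
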